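(* Let $(E,d)$ be a metric space with a Borel probability measure $\mu$, let $k\geq1$ and $\alpha_k:[0,\infty)\to[0,\infty)$, and assume $(E,d,\mu)$ satisfies the multi-set concentration of measure property of order $k$ with concentration profile $\alpha_k$. Let $f:E\to\mathbb{R}$ be $1$-Lipschitz, and let $A_1,\ldots,A_k$ be Borel subsets of $E$ with $(\mu(A_1),\ldots,\mu(A_k))\in\Delta_k$; set $A=A_1\cup\cdots\cup A_k$. Then for any $1$-Lipschitz function $g:E\to\mathbb{R}$ with $g=f$ on $A$, \[ \mu(|f-g|\geq r)\leq(1-\mu(A))\,\alpha_k(r/2),\qquad\forall\,0<r\leq\min_{i\neq j}d(A_i,A_j). \]
   Context: For $A,B\subset E$, $d(A,B)=\inf\{d(x,y):x\in A,y\in B\}$ and for $r>0$, $A_r=\{x\in E:\exists y\in A,\ d(x,y)<r\}$. $\Delta_k$ is the set of $(a_1,\ldots,a_k)\in[0,1]^k$ with $\sum_ja_j\leq1$ and $a_i+\sum_ja_j\geq1$ for every $i$. $(E,d,\mu)$ satisfies the multi-set concentration of measure property of order $k$ with profile $\alpha_k$ if for all Borel sets $A_1,\ldots,A_k\subset E$ with $(\mu(A_1),\ldots,\mu(A_k))\in\Delta_k$, the set $A=A_1\cup\cdots\cup A_k$ satisfies $\mu(A_r)\geq1-(1-\mu(A))\alpha_k(r)$ for all $0<r\leq\frac12\min_{i\neq j}d(A_i,A_j)$. *)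

theory Defs
  imports "HOL-Probability.Probability"
begin

text \<open>Distance between two sets, d(A,B) = inf of d(x,y); value in ereal, so the
  infimum over an empty set is +infinity.\<close>
definition set_dist :: "'a::metric_space set \<Rightarrow> 'a set \<Rightarrow> ereal" where
  "set_dist A B = Inf {ereal (dist x y) | x y. x \<in> A \<and> y \<in> B}"

text \<open>min over i \<noteq> j (indices 0..k-1) of d(A_i,A_j); +infinity if there are no such pairs.\<close>
definition min_sep :: "nat \<Rightarrow> (nat \<Rightarrow> 'a::metric_space set) \<Rightarrow> ereal" where
  "min_sep k A = Inf {set_dist (A i) (A j) | i j. i < k \<and> j < k \<and> i \<noteq> j}"

definition enlarge :: "'a::metric_space set \<Rightarrow> real \<Rightarrow> 'a set" where
  "enlarge A r = {x. \<exists>y\<in>A. dist x y < r}"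

definition in_Delta :: "nat \<Rightarrow> (nat \<Rightarrow> real) \<Rightarrow> bool" where
  "in_Delta k a \<longleftrightarrow> (\<forall>i<k. 0 \<le> a i \<and> a i \<le> 1) \<and> (\<Sum>j<k. a j) \<le> 1
      \<and> (\<forall>i<k. a i + (\<Sum>j<k. a j) \<ge> 1)"

definition multiset_concentration ::
    "'a::metric_space measure \<Rightarrow> nat \<Rightarrow> (real \<Rightarrow> real) \<Rightarrow> bool" where
  "multiset_concentration M k \<alpha> \<longleftrightarrow>
     (\<forall>A::nat \<Rightarrow> 'a set. (\<forall>i<k. A i \<in> sets M) \<and> in_Delta k (\<lambda>i. measure M (A i)) \<longrightarrow>
        (\<forall>r>0. ereal r \<le> min_sep k A / 2 \<longrightarrow>
           measure M (enlarge (\<Union>i<k. A i) r)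
             \<ge> 1 - (1 - measure M (\<Union>i<k. A i)) * \<alpha> r))"

end

theory Submission
  imports Defs
begin

lemma enlarge_open: "open (enlarge (S::'a::metric_space set) r)"
proof -
  have "enlarge S r = (\<Union>y\<in>S. ball y r)"
    unfolding enlarge_def by (auto simp: dist_commute)
  then show ?thesis by auto
qed

theorem proposition4p3:
  fixes M :: "'a::metric_space measure" and k :: nat and \<alpha> :: "real \<Rightarrow> real"
    and f g :: "'a \<Rightarrow> real" and A :: "nat \<Rightarrow> 'a set"
  assumes "prob_space M" and "sets M = sets borel"
    and "k \<ge> 1"
    and "\<forall>r\<ge>0. \<alpha> r \<ge> 0"
    and "multiset_concentration M k \<alpha>"
    and "1-lipschitz_on UNIV f"
    and "\<forall>i<k. A i \<in> sets borel"
    and "in_Delta k (\<lambda>i. measure M (A i))"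
    and "1-lipschitz_on UNIV g"
    and "\<forall>x\<in>(\<Union>i<k. A i). g x = f x"
  shows "\<forall>r>0. ereal r \<le> min_sep k A \<longrightarrow>
           measure M {x. \<bar>f x - g x\<bar> \<ge> r} \<le> (1 - measure M (\<Union>i<k. A i)) * \<alpha> (r / 2)"
proof (intro allI impI)
  fix r :: real assume r: "r > 0" "ereal r \<le> min_sep k A"
  interpret P: prob_space M by fact
  have sp: "space M = UNIV" using sets_eq_imp_space_eq[OF assms(2)] by simp
  have Ai: "\<forall>i<k. A i \<in> sets M" using assms(2,7) by simp
  have r2: "ereal (r/2) \<le> min_sep k A / 2"
  proof -
    have "ereal (r/2) = ereal r / 2" by simp
    also have "\<dots> \<le> min_sep k A / 2" by (rule ereal_divide_right_mono[OF r(2)]) simp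
    finally show ?thesis .
  qed
  have conc: "measure M (enlarge (\<Union>i<k. A i) (r/2)) \<ge> 1 - (1 - measure M (\<Union>i<k. A i)) * \<alpha> (r/2)"
    using assms(5) Ai assms(8) r r2 unfolding multiset_concentration_def by auto
  define E where "E = enlarge (\<Union>i<k. A i) (r/2)"
  have Em: "E \<in> sets M" unfolding E_def using assms(2) borel_open[OF enlarge_open] by simp
  have sub: "{x. \<bar>f x - g x\<bar> \<ge> r} \<subseteq> space M - E"
  proof
    fix x assume x: "x \<in> {x. \<bar>f x - g x\<bar> \<ge> r}"
    have "x \<notin> E"
    proof
      assume "x \<in> E"
      then obtain y where y: "y \<in> (\<Union>i<k. A i)" "dist x y < r/2"
        unfolding E_def enlarge_def by auto
      have "\<bar>f x - f y\<bar> \<le> dist x y" using lipschitz_onD[OF assms(6), of x y]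
        by (simp add: dist_real_def)
      moreover have "\<bar>g x - g y\<bar> \<le> dist x y" using lipschitz_onD[OF assms(9), of x y]
        by (simp add: dist_real_def)
      moreover have "g y = f y" using y assms(10) by blast
      ultimately have "\<bar>f x - g x\<bar> < r" using y(2) by linarith
      then show False using x by simp
    qed
    then show "x \<in> space M - E" using sp by simp
  qed
  have "measure M {x. \<bar>f x - g x\<bar> \<ge> r} \<le> measure M (space M - E)"
    using sub Em by (intro P.finite_measure_mono) auto
  also have "\<dots> = 1 - measure M E" using P.prob_compl[OF Em] by simp
  also have "\<dots> \<le> (1 - measure M (\<Union>i<k. A i)) * \<alpha> (r / 2)" using conc E_def by simp
  finally show "measure M {x. \<bar>f x - g x\<bar> \<ge> r} \<le> (1 - measure M (\<Union>i<k. A i)) * \<alpha> (r / 2)" .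
qed

end
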